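(* For $x=(x_n)_{n\ge1}\in\ell^{1,1/2}$ define $$Q(x):=\sum_{n\ge1}n x_n^2+2\sum_{n\ge1}n x_n\sum_{k>n}x_k .$$ Then $Q$ is well defined (the series converge absolutely) on $\ell^{1,1/2}$, it is positive semidefinite, i.e. $Q(x)\ge0$ for all $x\in\ell^{1,1/2}$, it satisfies $|Q(x)|\le 2\|x\|_{\ell^{1,1/2}}^2$ for all $x\in\ell^{1,1/2}$, and $$\inf\{Q(x): x\in\ell^{1,1/2},\ \|x\|_{\ell^{1,1/2}}=1\}=0,$$ so $Q$ is not positive definite (in the sense of being bounded below by a positive multiple of $\|x\|^2_{\ell^{1,1/2}}$).
   Context: $\ell^{1,1/2}$ denotes the space of real sequences $x=(x_n)_{n\ge1}$ with $\|x\|_{\ell^{1,1/2}}:=\sum_{n\ge1}\sqrt n\,|x_n|<\infty$. *)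

theory Defs
  imports Complex_Main
begin

text \<open>A real sequence (x_n)_{n>=1} is represented by x :: nat => real; the value x 0 is
  ignored (it plays no role in any of the quantities below).\<close>

definition wnorm :: "(nat \<Rightarrow> real) \<Rightarrow> real" where
  "wnorm x = (\<Sum>m. sqrt (real (Suc m)) * \<bar>x (Suc m)\<bar>)"

definition ell112 :: "(nat \<Rightarrow> real) set" where
  "ell112 = {x. summable (\<lambda>m. sqrt (real (Suc m)) * \<bar>x (Suc m)\<bar>)}"

definition tail :: "(nat \<Rightarrow> real) \<Rightarrow> nat \<Rightarrow> real" where
  "tail x n = (\<Sum>j. x (n + Suc j))"

definition Qform :: "(nat \<Rightarrow> real) \<Rightarrow> real" where
  "Qform x = (\<Sum>m. real (Suc m) * (x (Suc m))\<^sup>2)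
           + 2 * (\<Sum>m. real (Suc m) * x (Suc m) * tail x (Suc m))"

end

theory Submission
  imports Defs
begin

definition aa :: "(nat \<Rightarrow> real) \<Rightarrow> nat \<Rightarrow> real" where
  "aa x m = sqrt (real (Suc m)) * \<bar>x (Suc m)\<bar>"
definition AA :: "(nat \<Rightarrow> real) \<Rightarrow> nat \<Rightarrow> real" where
  "AA x n = (\<Sum>j. aa x (j + n))"
definition SS :: "(nat \<Rightarrow> real) \<Rightarrow> nat \<Rightarrow> real" where
  "SS x n = (\<Sum>j. x (Suc (j + n)))"

lemma aa_nonneg: "aa x m \<ge> 0"
  by (simp add: aa_def)

lemma absx_le: "\<bar>x (Suc m)\<bar> \<le> aa x m"
proof -
  have "1 \<le> sqrt (real (Suc m))" by simp
  then have "1 * \<bar>x (Suc m)\<bar> \<le> sqrt (real (Suc m)) * \<bar>x (Suc m)\<bar>"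
    by (intro mult_right_mono) auto
  then show ?thesis by (simp add: aa_def)
qed

context
  fixes x :: "nat \<Rightarrow> real"
  assumes sa: "summable (aa x)"
begin

lemma sa_shift: "summable (\<lambda>j. aa x (j + n))"
  using summable_ignore_initial_segment[OF sa] by simp

lemma sx_shift: "summable (\<lambda>j. \<bar>x (Suc (j + n))\<bar>)"
  by (rule summable_comparison_test[OF _ sa_shift[of n]]) (auto intro: absx_le)

lemma sx_shift': "summable (\<lambda>j. x (Suc (j + n)))"
  by (rule summable_rabs_cancel[OF sx_shift])

lemma AA_rec: "AA x n = aa x n + AA x (Suc n)"
  using suminf_split_head[OF sa_shift[of n]] by (simp add: AA_def)

lemma SS_rec: "SS x n = x (Suc n) + SS x (Suc n)"
  using suminf_split_head[OF sx_shift'[of n]] by (simp add: SS_def)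

lemma AA_nonneg: "AA x n \<ge> 0"
  unfolding AA_def by (rule suminf_nonneg[OF sa_shift]) (simp add: aa_nonneg)

lemma AA_dec: "AA x n \<le> AA x 0"
proof -
  have "decseq (AA x)"
    by (rule decseq_SucI) (metis AA_rec aa_nonneg le_add_same_cancel2)
  then show ?thesis by (simp add: decseqD)
qed

lemma aa_le: "aa x n \<le> AA x 0"
  using AA_rec[of n] AA_nonneg[of "Suc n"] AA_dec[of n] by linarith

lemma AA_lim: "AA x \<longlonglongrightarrow> 0"
proof (rule LIMSEQ_I)
  fix r :: real assume "0 < r"
  from suminf_exist_split[OF this sa] show "\<exists>no. \<forall>n\<ge>no. norm (AA x n - 0) < r"
    by (simp add: AA_def)
qed

lemma SS_bound: "sqrt (real n) * \<bar>SS x n\<bar> \<le> AA x n"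
proof -
  have "\<bar>SS x n\<bar> \<le> (\<Sum>j. \<bar>x (Suc (j + n))\<bar>)"
    unfolding SS_def using summable_rabs[OF sx_shift] by simp
  then have "sqrt (real n) * \<bar>SS x n\<bar> \<le> sqrt (real n) * (\<Sum>j. \<bar>x (Suc (j + n))\<bar>)"
    by (intro mult_left_mono) auto
  also have "\<dots> = (\<Sum>j. sqrt (real n) * \<bar>x (Suc (j + n))\<bar>)"
    using suminf_mult[OF sx_shift, of "sqrt (real n)"] by simp
  also have "\<dots> \<le> AA x n"
    unfolding AA_def
  proof (rule suminf_le)
    fix j
    have "sqrt (real n) \<le> sqrt (real (Suc (j + n)))" by simp
    then show "sqrt (real n) * \<bar>x (Suc (j + n))\<bar> \<le> aa x (j + n)"
      unfolding aa_def by (intro mult_right_mono) auto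
  qed (auto intro: summable_mult sx_shift sa_shift sa)
  finally show ?thesis .
qed

lemma tail_eq: "tail x (Suc m) = SS x (Suc m)"
  unfolding tail_def SS_def by (simp add: ac_simps)

lemma term_bound: "\<bar>real (Suc m) * x (Suc m) * tail x (Suc m)\<bar> \<le> aa x m * AA x (Suc m)"
proof -
  have r: "real (Suc m) = sqrt (real (Suc m)) * sqrt (real (Suc m))" by simp
  have "\<bar>real (Suc m) * x (Suc m) * tail x (Suc m)\<bar>
      = aa x m * (sqrt (real (Suc m)) * \<bar>SS x (Suc m)\<bar>)"
    unfolding tail_eq aa_def by (subst r) (simp add: abs_mult)
  also have "\<dots> \<le> aa x m * AA x (Suc m)"
    by (intro mult_left_mono SS_bound aa_nonneg)
  finally show ?thesis .
qed

lemma sq_eq: "\<bar>real (Suc m) * (x (Suc m))\<^sup>2\<bar> = (aa x m)\<^sup>2"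
  by (simp add: aa_def power_mult_distrib)

lemma summ_aa2: "summable (\<lambda>m. (aa x m)\<^sup>2)"
proof (rule summable_comparison_test[OF _ summable_mult[OF sa, of "AA x 0"]])
  show "\<exists>N. \<forall>n\<ge>N. norm ((aa x n)\<^sup>2) \<le> AA x 0 * aa x n"
    using aa_le aa_nonneg by (auto simp: power2_eq_square intro!: mult_right_mono)
qed

lemma summ_aaA: "summable (\<lambda>m. aa x m * AA x (Suc m))"
proof (rule summable_comparison_test[OF _ summable_mult[OF sa, of "AA x 0"]])
  show "\<exists>N. \<forall>n\<ge>N. norm (aa x n * AA x (Suc n)) \<le> AA x 0 * aa x n"
  proof (intro exI[of _ 0] allI impI)
    fix n
    have "aa x n * AA x (Suc n) \<le> aa x n * AA x 0"
      by (intro mult_left_mono AA_dec aa_nonneg)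
    then show "norm (aa x n * AA x (Suc n)) \<le> AA x 0 * aa x n"
      using AA_nonneg[of "Suc n"] aa_nonneg[of x n] by (simp add: abs_mult mult.commute)
  qed
qed

lemma summ1: "summable (\<lambda>m. \<bar>real (Suc m) * (x (Suc m))\<^sup>2\<bar>)"
  unfolding sq_eq by (rule summ_aa2)

lemma summ2: "summable (\<lambda>m. \<bar>real (Suc m) * x (Suc m) * tail x (Suc m)\<bar>)"
  by (rule summable_comparison_test[OF _ summ_aaA], rule exI[of _ 0], intro allI impI,
      simp only: real_norm_def abs_abs, rule term_bound)

lemma summ_tail: "summable (\<lambda>j. \<bar>x (n + Suc j)\<bar>)"
  using sx_shift[of n] by (simp add: ac_simps)

lemma wnorm_eq: "wnorm x = AA x 0"
  by (simp add: wnorm_def AA_def aa_def)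

lemma Q_bound: "\<bar>Qform x\<bar> \<le> (wnorm x)\<^sup>2"
proof -
  have s1: "summable (\<lambda>m. real (Suc m) * (x (Suc m))\<^sup>2)"
    by (rule summable_rabs_cancel[OF summ1])
  have s2: "summable (\<lambda>m. real (Suc m) * x (Suc m) * tail x (Suc m))"
    by (rule summable_rabs_cancel[OF summ2])
  have b1: "\<bar>\<Sum>m. real (Suc m) * (x (Suc m))\<^sup>2\<bar> \<le> (\<Sum>m. (aa x m)\<^sup>2)"
    using summable_rabs[OF summ1] unfolding sq_eq by simp
  have b2: "\<bar>\<Sum>m. real (Suc m) * x (Suc m) * tail x (Suc m)\<bar> \<le> (\<Sum>m. aa x m * AA x (Suc m))"
    using summable_rabs[OF summ2] suminf_le[OF term_bound summ2 summ_aaA] by linarith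
  have tel: "(\<lambda>m. (AA x m)\<^sup>2 - (AA x (Suc m))\<^sup>2) sums ((AA x 0)\<^sup>2 - 0)"
    using telescope_sums'[of "\<lambda>n. (AA x n)\<^sup>2" 0] tendsto_power[OF AA_lim, of 2] by simp
  have eq: "(\<lambda>m. (AA x m)\<^sup>2 - (AA x (Suc m))\<^sup>2) = (\<lambda>m. (aa x m)\<^sup>2 + 2 * (aa x m * AA x (Suc m)))"
    by (rule ext, subst AA_rec) (simp add: power2_eq_square algebra_simps)
  have "(\<Sum>m. (aa x m)\<^sup>2) + 2 * (\<Sum>m. aa x m * AA x (Suc m))
      = (\<Sum>m. (aa x m)\<^sup>2 + 2 * (aa x m * AA x (Suc m)))"
    using suminf_add[OF summ_aa2 summable_mult[OF summ_aaA, of 2]] suminf_mult[OF summ_aaA, of 2] by simp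
  also have "\<dots> = (AA x 0)\<^sup>2" using sums_unique[OF tel] unfolding eq by simp
  finally have e: "(\<Sum>m. (aa x m)\<^sup>2) + 2 * (\<Sum>m. aa x m * AA x (Suc m)) = (wnorm x)\<^sup>2"
    by (simp add: wnorm_eq)
  show ?thesis unfolding Qform_def using b1 b2 e by linarith
qed

lemma partial_eq:
  "(\<Sum>m<N. real (Suc m) * ((SS x m)\<^sup>2 - (SS x (Suc m))\<^sup>2))
     = (\<Sum>m<N. (SS x m)\<^sup>2) - real N * (SS x N)\<^sup>2"
  by (induction N) (simp_all add: algebra_simps)

lemma Q_nonneg: "Qform x \<ge> 0"
proof -
  have s1: "summable (\<lambda>m. real (Suc m) * (x (Suc m))\<^sup>2)"
    by (rule summable_rabs_cancel[OF summ1])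
  have s2: "summable (\<lambda>m. real (Suc m) * x (Suc m) * tail x (Suc m))"
    by (rule summable_rabs_cancel[OF summ2])
  define t where "t m = real (Suc m) * (x (Suc m))\<^sup>2 + 2 * (real (Suc m) * x (Suc m) * tail x (Suc m))" for m
  have st: "summable t" unfolding t_def by (intro summable_add s1 summable_mult s2)
  have Qt: "Qform x = suminf t"
    unfolding Qform_def t_def using suminf_add[OF s1 summable_mult[OF s2, of 2]] suminf_mult[OF s2, of 2] by simp
  have teq: "t m = real (Suc m) * ((SS x m)\<^sup>2 - (SS x (Suc m))\<^sup>2)" for m
    unfolding t_def tail_eq by (subst SS_rec[of m]) (simp add: power2_eq_square algebra_simps)
  have L1: "(\<lambda>N. \<Sum>m<N. t m) \<longlonglongrightarrow> Qform x" using summable_LIMSEQ[OF st] Qt by simp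
  have L0: "(\<lambda>N. real N * (SS x N)\<^sup>2) \<longlonglongrightarrow> 0"
  proof (rule tendsto_sandwich[of "\<lambda>_. 0" _ _ "\<lambda>N. (AA x N)\<^sup>2"])
    show "\<forall>\<^sub>F N in sequentially. 0 \<le> real N * (SS x N)\<^sup>2" by simp
    show "\<forall>\<^sub>F N in sequentially. real N * (SS x N)\<^sup>2 \<le> (AA x N)\<^sup>2"
    proof (rule always_eventually, rule allI)
      fix N
      have "real N * (SS x N)\<^sup>2 = (sqrt (real N) * \<bar>SS x N\<bar>)\<^sup>2"
        by (simp add: power_mult_distrib)
      also have "\<dots> \<le> (AA x N)\<^sup>2"
        by (rule power_mono[OF SS_bound]) simp
      finally show "real N * (SS x N)\<^sup>2 \<le> (AA x N)\<^sup>2" .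
    qed
    show "(\<lambda>_. 0::real) \<longlonglongrightarrow> 0" by simp
    show "(\<lambda>N. (AA x N)\<^sup>2) \<longlonglongrightarrow> 0" using tendsto_power[OF AA_lim, of 2] by simp
  qed
  have L2: "(\<lambda>N. - (real N * (SS x N)\<^sup>2)) \<longlonglongrightarrow> 0" using tendsto_minus[OF L0] by simp
  have "\<forall>N. - (real N * (SS x N)\<^sup>2) \<le> (\<Sum>m<N. t m)"
    unfolding teq partial_eq by (simp add: sum_nonneg)
  then show ?thesis using LIMSEQ_le[OF L2 L1] by auto
qed

end


lemma ell112_iff: "x \<in> ell112 \<longleftrightarrow> summable (aa x)"
  by (simp add: ell112_def aa_def[abs_def])

definition cc :: "nat \<Rightarrow> real" where
  "cc k = 1 / (sqrt (real (Suc k)) + sqrt (real (Suc (Suc k))))"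

definition xx :: "nat \<Rightarrow> nat \<Rightarrow> real" where
  "xx k n = (if n = Suc k then cc k else if n = Suc (Suc k) then - cc k else 0)"

lemma cc_pos: "cc k > 0"
  unfolding cc_def by (simp add: add_pos_pos)

lemma aa_sums: "aa (xx k) sums (sqrt (real (Suc k)) * cc k + sqrt (real (Suc (Suc k))) * cc k)"
proof -
  have "aa (xx k) sums (\<Sum>m\<in>{k, Suc k}. aa (xx k) m)"
    by (rule sums_finite) (auto simp: aa_def xx_def)
  then show ?thesis using cc_pos[of k] by (simp add: aa_def xx_def)
qed

lemma xx_ell: "xx k \<in> ell112"
  using aa_sums sums_summable ell112_iff by blast

lemma xx_wnorm: "wnorm (xx k) = 1"
proof -
  have "wnorm (xx k) = suminf (aa (xx k))" by (simp add: wnorm_def aa_def[abs_def])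
  also have "\<dots> = sqrt (real (Suc k)) * cc k + sqrt (real (Suc (Suc k))) * cc k"
    using sums_unique[OF aa_sums] by simp
  also have "\<dots> = (sqrt (real (Suc k)) + sqrt (real (Suc (Suc k)))) * cc k"
    by (simp add: algebra_simps)
  also have "\<dots> = 1"
  proof -
    have "sqrt (real (Suc k)) + sqrt (real (Suc (Suc k))) > 0" by (intro add_pos_nonneg) auto
    then show ?thesis unfolding cc_def by simp
  qed
  finally show ?thesis .
qed

lemma xx_tail1: "tail (xx k) (Suc k) = - cc k"
proof -
  have "(\<lambda>j. xx k (Suc k + Suc j)) sums (\<Sum>j\<in>{0}. xx k (Suc k + Suc j))"
    by (rule sums_finite) (auto simp: xx_def)
  then have "(\<Sum>j. xx k (Suc k + Suc j)) = xx k (Suc k + Suc 0)" by (simp add: sums_iff)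
  then show ?thesis unfolding tail_def by (simp add: xx_def)
qed

lemma xx_tail2: "tail (xx k) (Suc (Suc k)) = 0"
  unfolding tail_def by (simp add: xx_def)

lemma xx_Q: "Qform (xx k) = (cc k)\<^sup>2"
proof -
  have a: "(\<lambda>m. real (Suc m) * (xx k (Suc m))\<^sup>2) sums (\<Sum>m\<in>{k, Suc k}. real (Suc m) * (xx k (Suc m))\<^sup>2)"
    by (rule sums_finite) (auto simp: xx_def)
  have b: "(\<lambda>m. real (Suc m) * xx k (Suc m) * tail (xx k) (Suc m)) sums
      (\<Sum>m\<in>{k, Suc k}. real (Suc m) * xx k (Suc m) * tail (xx k) (Suc m))"
    by (rule sums_finite) (auto simp: xx_def)
  have "Qform (xx k) = (real (Suc k) * (cc k)\<^sup>2 + real (Suc (Suc k)) * (cc k)\<^sup>2)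
        + 2 * (real (Suc k) * cc k * (- cc k))"
    unfolding Qform_def using sums_unique[OF a] sums_unique[OF b]
    by (simp add: xx_def xx_tail1 xx_tail2 del: of_nat_Suc)
  also have "\<dots> = (cc k)\<^sup>2" by (simp add: algebra_simps power2_eq_square)
  finally show ?thesis .
qed

lemma cc_small: "(cc k)\<^sup>2 \<le> 1 / real (Suc k)"
proof -
  have s: "sqrt (real (Suc k)) > 0" by simp
  have "cc k \<le> 1 / sqrt (real (Suc k))"
    unfolding cc_def by (intro divide_left_mono mult_pos_pos add_pos_nonneg) simp_all
  then have "(cc k)\<^sup>2 \<le> (1 / sqrt (real (Suc k)))\<^sup>2"
    using cc_pos[of k] by (intro power_mono) auto
  also have "\<dots> = 1 / real (Suc k)" by (simp add: power_divide)
  finally show ?thesis .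
qed

theorem proposition2p2:
  shows "(\<forall>x\<in>ell112.
            summable (\<lambda>m. \<bar>real (Suc m) * (x (Suc m))\<^sup>2\<bar>)
          \<and> (\<forall>n\<ge>1. summable (\<lambda>j. \<bar>x (n + Suc j)\<bar>))
          \<and> summable (\<lambda>m. \<bar>real (Suc m) * x (Suc m) * tail x (Suc m)\<bar>))
       \<and> (\<forall>x\<in>ell112. Qform x \<ge> 0)
       \<and> (\<forall>x\<in>ell112. \<bar>Qform x\<bar> \<le> 2 * (wnorm x)\<^sup>2)
       \<and> Inf (Qform ` {x\<in>ell112. wnorm x = 1}) = 0"
proof (intro conjI ballI allI impI)
  fix x assume "x \<in> ell112"
  then have sa: "summable (aa x)" by (simp add: ell112_iff)
  show "summable (\<lambda>m. \<bar>real (Suc m) * (x (Suc m))\<^sup>2\<bar>)" using summ1[OF sa] .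
  show "summable (\<lambda>m. \<bar>real (Suc m) * x (Suc m) * tail x (Suc m)\<bar>)" using summ2[OF sa] .
  fix n :: nat
  show "summable (\<lambda>j. \<bar>x (n + Suc j)\<bar>)" using summ_tail[OF sa] .
next
  fix x assume "x \<in> ell112"
  then have sa: "summable (aa x)" by (simp add: ell112_iff)
  show "Qform x \<ge> 0" using Q_nonneg[OF sa] .
next
  fix x assume "x \<in> ell112"
  then have sa: "summable (aa x)" by (simp add: ell112_iff)
  show "\<bar>Qform x\<bar> \<le> 2 * (wnorm x)\<^sup>2" using Q_bound[OF sa] by simp
next
  let ?S = "Qform ` {x\<in>ell112. wnorm x = 1}"
  have ne: "?S \<noteq> {}" using xx_ell[of 0] xx_wnorm[of 0] by blast
  have lb: "\<And>q. q \<in> ?S \<Longrightarrow> 0 \<le> q" using Q_nonneg ell112_iff by auto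
  have bdd: "bdd_below ?S" unfolding bdd_below_def using lb by blast
  have ge: "0 \<le> Inf ?S" by (rule cInf_greatest[OF ne lb])
  have mem: "\<And>k. (cc k)\<^sup>2 \<in> ?S"
  proof -
    fix k
    have "xx k \<in> {x\<in>ell112. wnorm x = 1}" using xx_ell xx_wnorm by simp
    then show "(cc k)\<^sup>2 \<in> ?S" using xx_Q[of k] by (metis image_eqI)
  qed
  show "Inf ?S = 0"
  proof (rule ccontr)
    assume "Inf ?S \<noteq> 0"
    with ge have pos: "Inf ?S > 0" by simp
    obtain k where k: "inverse (real (Suc k)) < Inf ?S" using reals_Archimedean[OF pos] by blast
    have "Inf ?S \<le> (cc k)\<^sup>2" by (rule cInf_lower[OF mem bdd])
    also have "\<dots> \<le> 1 / real (Suc k)" by (rule cc_small)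
    finally show False using k by (simp add: inverse_eq_divide)
  qed
qed

end
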